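(* Let $(M_i)_{i\in I}$ be a family of objects of an abelian category $\mathcal{A}$. (1) Assume that the product $\prod_{i\in I} M_i$ exists and is a strongly self-Rickart object. Then $M_i$ is strongly $M_j$-Rickart for every $i,j\in I$. (2) Assume that the coproduct $\bigoplus_{i\in I} M_i$ exists and is a dual strongly self-Rickart object. Then $M_i$ is dual strongly $M_j$-Rickart for every $i,j\in I$.
   Context: A morphism $f:X\to Y$ is a section if $f'f=1_X$ for some $f'$, a retraction if $ff'=1_Y$ for some $f'$. A monomorphism $k:K\to X$ is fully invariant if for every $h:X\to X$ there is $\alpha:K\to K$ with $hk=k\alpha$; an epimorphism $c:X\to C$ is fully coinvariant if for every $h:X\to X$ there is $\gamma:C\to C$ with $ch=\gamma c$. For objects $M,N$: $N$ is strongly $M$-Rickart if the kernel of every morphism $f:M\to N$ is a fully invariant section; $N$ is dual strongly $M$-Rickart if the cokernel of every morphism $f:M\to N$ is a fully coinvariant retraction. An object is (dual) strongly self-Rickart if it is (dual) strongly Rickart relative to itself. *)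

theory Defs
  imports "HOL-Algebra.Group"
begin

text \<open>An (additive) category presented by objects, arrows with source/target,
  partial composition (cmp g f = g after f), identities, and for the
  preadditive structure a binary addition on arrows and zero arrows.\<close>

record ('o, 'm) acat =
  ob  :: "'o set"
  ar  :: "'m set"
  src :: "'m \<Rightarrow> 'o"
  tgt :: "'m \<Rightarrow> 'o"
  cmp :: "'m \<Rightarrow> 'm \<Rightarrow> 'm"
  idm :: "'o \<Rightarrow> 'm"
  add :: "'m \<Rightarrow> 'm \<Rightarrow> 'm"
  zer :: "'o \<Rightarrow> 'o \<Rightarrow> 'm"

definition Hom :: "('o, 'm) acat \<Rightarrow> 'o \<Rightarrow> 'o \<Rightarrow> 'm set" where
  "Hom C X Y = {f \<in> ar C. src C f = X \<and> tgt C f = Y}"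

definition is_category :: "('o, 'm) acat \<Rightarrow> bool" where
  "is_category C \<longleftrightarrow>
     (\<forall>f \<in> ar C. src C f \<in> ob C \<and> tgt C f \<in> ob C) \<and>
     (\<forall>X \<in> ob C. idm C X \<in> Hom C X X) \<and>
     (\<forall>X \<in> ob C. \<forall>Y \<in> ob C. \<forall>Z \<in> ob C. \<forall>f \<in> Hom C X Y. \<forall>g \<in> Hom C Y Z.
        cmp C g f \<in> Hom C X Z) \<and>
     (\<forall>f \<in> ar C. \<forall>g \<in> ar C. \<forall>h \<in> ar C. tgt C f = src C g \<longrightarrow> tgt C g = src C h \<longrightarrow>
        cmp C h (cmp C g f) = cmp C (cmp C h g) f) \<and>
     (\<forall>f \<in> ar C. cmp C f (idm C (src C f)) = f \<and> cmp C (idm C (tgt C f)) f = f)"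

definition hom_group :: "('o, 'm) acat \<Rightarrow> 'o \<Rightarrow> 'o \<Rightarrow> 'm monoid" where
  "hom_group C X Y = \<lparr>carrier = Hom C X Y, mult = add C, one = zer C X Y\<rparr>"

definition is_preadditive :: "('o, 'm) acat \<Rightarrow> bool" where
  "is_preadditive C \<longleftrightarrow> is_category C \<and>
     (\<forall>X \<in> ob C. \<forall>Y \<in> ob C. comm_group (hom_group C X Y)) \<and>
     (\<forall>X \<in> ob C. \<forall>Y \<in> ob C. \<forall>Z \<in> ob C. \<forall>f \<in> Hom C X Y. \<forall>g \<in> Hom C Y Z. \<forall>g' \<in> Hom C Y Z.
        cmp C (add C g g') f = add C (cmp C g f) (cmp C g' f)) \<and>
     (\<forall>X \<in> ob C. \<forall>Y \<in> ob C. \<forall>Z \<in> ob C. \<forall>f \<in> Hom C X Y. \<forall>f' \<in> Hom C X Y. \<forall>g \<in> Hom C Y Z.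
        cmp C g (add C f f') = add C (cmp C g f) (cmp C g f'))"

definition mono :: "('o, 'm) acat \<Rightarrow> 'm \<Rightarrow> bool" where
  "mono C m \<longleftrightarrow> m \<in> ar C \<and>
     (\<forall>g \<in> ar C. \<forall>h \<in> ar C. tgt C g = src C m \<longrightarrow> tgt C h = src C m \<longrightarrow> src C g = src C h \<longrightarrow>
        cmp C m g = cmp C m h \<longrightarrow> g = h)"

definition epi :: "('o, 'm) acat \<Rightarrow> 'm \<Rightarrow> bool" where
  "epi C e \<longleftrightarrow> e \<in> ar C \<and>
     (\<forall>g \<in> ar C. \<forall>h \<in> ar C. src C g = tgt C e \<longrightarrow> src C h = tgt C e \<longrightarrow> tgt C g = tgt C h \<longrightarrow>
        cmp C g e = cmp C h e \<longrightarrow> g = h)"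

definition is_kernel :: "('o, 'm) acat \<Rightarrow> 'm \<Rightarrow> 'm \<Rightarrow> bool" where
  "is_kernel C f k \<longleftrightarrow> f \<in> ar C \<and> k \<in> ar C \<and> tgt C k = src C f \<and>
     cmp C f k = zer C (src C k) (tgt C f) \<and>
     (\<forall>g \<in> ar C. tgt C g = src C f \<longrightarrow> cmp C f g = zer C (src C g) (tgt C f) \<longrightarrow>
        (\<exists>!u. u \<in> Hom C (src C g) (src C k) \<and> cmp C k u = g))"

definition is_cokernel :: "('o, 'm) acat \<Rightarrow> 'm \<Rightarrow> 'm \<Rightarrow> bool" where
  "is_cokernel C f c \<longleftrightarrow> f \<in> ar C \<and> c \<in> ar C \<and> src C c = tgt C f \<and>
     cmp C c f = zer C (src C f) (tgt C c) \<and>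
     (\<forall>g \<in> ar C. src C g = tgt C f \<longrightarrow> cmp C g f = zer C (src C f) (tgt C g) \<longrightarrow>
        (\<exists>!u. u \<in> Hom C (tgt C c) (tgt C g) \<and> cmp C u c = g))"

definition is_product :: "('o, 'm) acat \<Rightarrow> 'i set \<Rightarrow> ('i \<Rightarrow> 'o) \<Rightarrow> 'o \<Rightarrow> ('i \<Rightarrow> 'm) \<Rightarrow> bool" where
  "is_product C I M P p \<longleftrightarrow> P \<in> ob C \<and> (\<forall>i \<in> I. p i \<in> Hom C P (M i)) \<and>
     (\<forall>X \<in> ob C. \<forall>f. (\<forall>i \<in> I. f i \<in> Hom C X (M i)) \<longrightarrow>
        (\<exists>!u. u \<in> Hom C X P \<and> (\<forall>i \<in> I. cmp C (p i) u = f i)))"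

definition is_coproduct :: "('o, 'm) acat \<Rightarrow> 'i set \<Rightarrow> ('i \<Rightarrow> 'o) \<Rightarrow> 'o \<Rightarrow> ('i \<Rightarrow> 'm) \<Rightarrow> bool" where
  "is_coproduct C I M S s \<longleftrightarrow> S \<in> ob C \<and> (\<forall>i \<in> I. s i \<in> Hom C (M i) S) \<and>
     (\<forall>X \<in> ob C. \<forall>f. (\<forall>i \<in> I. f i \<in> Hom C (M i) X) \<longrightarrow>
        (\<exists>!u. u \<in> Hom C S X \<and> (\<forall>i \<in> I. cmp C u (s i) = f i)))"

definition is_abelian :: "('o, 'm) acat \<Rightarrow> bool" where
  "is_abelian C \<longleftrightarrow> is_preadditive C \<and>
     (\<exists>Z \<in> ob C. idm C Z = zer C Z Z) \<and>
     (\<forall>X \<in> ob C. \<forall>Y \<in> ob C. \<exists>P p. is_product C (UNIV :: bool set) (\<lambda>b. if b then X else Y) P p) \<and>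
     (\<forall>f \<in> ar C. \<exists>k. is_kernel C f k) \<and>
     (\<forall>f \<in> ar C. \<exists>c. is_cokernel C f c) \<and>
     (\<forall>m. mono C m \<longrightarrow> (\<exists>f. is_kernel C f m)) \<and>
     (\<forall>e. epi C e \<longrightarrow> (\<exists>f. is_cokernel C f e))"

definition is_section :: "('o, 'm) acat \<Rightarrow> 'm \<Rightarrow> bool" where
  "is_section C f \<longleftrightarrow> f \<in> ar C \<and>
     (\<exists>f' \<in> Hom C (tgt C f) (src C f). cmp C f' f = idm C (src C f))"

definition is_retraction :: "('o, 'm) acat \<Rightarrow> 'm \<Rightarrow> bool" where
  "is_retraction C f \<longleftrightarrow> f \<in> ar C \<and>
     (\<exists>f' \<in> Hom C (tgt C f) (src C f). cmp C f f' = idm C (tgt C f))"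

definition fully_invariant :: "('o, 'm) acat \<Rightarrow> 'm \<Rightarrow> bool" where
  "fully_invariant C k \<longleftrightarrow> mono C k \<and>
     (\<forall>h \<in> Hom C (tgt C k) (tgt C k). \<exists>\<alpha> \<in> Hom C (src C k) (src C k). cmp C h k = cmp C k \<alpha>)"

definition fully_coinvariant :: "('o, 'm) acat \<Rightarrow> 'm \<Rightarrow> bool" where
  "fully_coinvariant C c \<longleftrightarrow> epi C c \<and>
     (\<forall>h \<in> Hom C (src C c) (src C c). \<exists>\<gamma> \<in> Hom C (tgt C c) (tgt C c). cmp C c h = cmp C \<gamma> c)"

text \<open>strongly_rickart C M N: N is strongly M-Rickart\<close>
definition strongly_rickart :: "('o, 'm) acat \<Rightarrow> 'o \<Rightarrow> 'o \<Rightarrow> bool" where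
  "strongly_rickart C M N \<longleftrightarrow>
     (\<forall>f \<in> Hom C M N. \<forall>k. is_kernel C f k \<longrightarrow> fully_invariant C k \<and> is_section C k)"

text \<open>dual_strongly_rickart C M N: N is dual strongly M-Rickart\<close>
definition dual_strongly_rickart :: "('o, 'm) acat \<Rightarrow> 'o \<Rightarrow> 'o \<Rightarrow> bool" where
  "dual_strongly_rickart C M N \<longleftrightarrow>
     (\<forall>f \<in> Hom C M N. \<forall>c. is_cokernel C f c \<longrightarrow> fully_coinvariant C c \<and> is_retraction C c)"

end

theory Submission
  imports Defs
begin

locale pa =
  fixes C :: "('o, 'm) acat"
  assumes pre: "is_preadditive C"
begin

lemma cat: "is_category C" using pre unfolding is_preadditive_def by blast

lemma Hom_iff[simp]: "f \<in> Hom C X Y \<longleftrightarrow> f \<in> ar C \<and> src C f = X \<and> tgt C f = Y"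
  by (simp add: Hom_def)

lemma src_ob[simp]: "f \<in> ar C \<Longrightarrow> src C f \<in> ob C"
  using cat unfolding is_category_def by blast
lemma tgt_ob[simp]: "f \<in> ar C \<Longrightarrow> tgt C f \<in> ob C"
  using cat unfolding is_category_def by blast

lemma cmp_props:
  assumes "f \<in> ar C" "g \<in> ar C" "tgt C f = src C g"
  shows "cmp C g f \<in> ar C \<and> src C (cmp C g f) = src C f \<and> tgt C (cmp C g f) = tgt C g"
proof -
  have "cmp C g f \<in> Hom C (src C f) (tgt C g)"
    using cat assms unfolding is_category_def
    by (metis Hom_iff src_ob tgt_ob)
  then show ?thesis by simp
qed

lemma cmp_ar[simp]: "f \<in> ar C \<Longrightarrow> g \<in> ar C \<Longrightarrow> tgt C f = src C g \<Longrightarrow> cmp C g f \<in> ar C"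
  using cmp_props by blast
lemma cmp_src[simp]: "f \<in> ar C \<Longrightarrow> g \<in> ar C \<Longrightarrow> tgt C f = src C g \<Longrightarrow> src C (cmp C g f) = src C f"
  using cmp_props by blast
lemma cmp_tgt[simp]: "f \<in> ar C \<Longrightarrow> g \<in> ar C \<Longrightarrow> tgt C f = src C g \<Longrightarrow> tgt C (cmp C g f) = tgt C g"
  using cmp_props by blast

lemma assoc[simp]: "f \<in> ar C \<Longrightarrow> g \<in> ar C \<Longrightarrow> h \<in> ar C \<Longrightarrow> tgt C f = src C g \<Longrightarrow> tgt C g = src C h
  \<Longrightarrow> cmp C (cmp C h g) f = cmp C h (cmp C g f)"
  using cat unfolding is_category_def by metis

lemma idm_props: "X \<in> ob C \<Longrightarrow> idm C X \<in> ar C \<and> src C (idm C X) = X \<and> tgt C (idm C X) = X"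
  using cat unfolding is_category_def by (metis Hom_iff)
lemma idm_ar[simp]: "X \<in> ob C \<Longrightarrow> idm C X \<in> ar C" using idm_props by blast
lemma idm_src[simp]: "X \<in> ob C \<Longrightarrow> src C (idm C X) = X" using idm_props by blast
lemma idm_tgt[simp]: "X \<in> ob C \<Longrightarrow> tgt C (idm C X) = X" using idm_props by blast

lemma idr[simp]: "f \<in> ar C \<Longrightarrow> src C f = X \<Longrightarrow> cmp C f (idm C X) = f"
  using cat unfolding is_category_def by blast
lemma idl[simp]: "f \<in> ar C \<Longrightarrow> tgt C f = X \<Longrightarrow> cmp C (idm C X) f = f"
  using cat unfolding is_category_def by blast

lemma grp: "X \<in> ob C \<Longrightarrow> Y \<in> ob C \<Longrightarrow> comm_group (hom_group C X Y)"
  using pre unfolding is_preadditive_def by blast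

lemma zer_Hom: "X \<in> ob C \<Longrightarrow> Y \<in> ob C \<Longrightarrow> zer C X Y \<in> Hom C X Y"
proof -
  assume "X \<in> ob C" "Y \<in> ob C"
  then interpret comm_group "hom_group C X Y" by (rule grp)
  show ?thesis using one_closed by (simp add: hom_group_def)
qed

lemma zer_ar[simp]: "X \<in> ob C \<Longrightarrow> Y \<in> ob C \<Longrightarrow> zer C X Y \<in> ar C" using zer_Hom by simp
lemma zer_src[simp]: "X \<in> ob C \<Longrightarrow> Y \<in> ob C \<Longrightarrow> src C (zer C X Y) = X" using zer_Hom by simp
lemma zer_tgt[simp]: "X \<in> ob C \<Longrightarrow> Y \<in> ob C \<Longrightarrow> tgt C (zer C X Y) = Y" using zer_Hom by simp

lemma zl[simp]:
  assumes "f \<in> ar C" "tgt C f = Y" "Z \<in> ob C"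
  shows "cmp C (zer C Y Z) f = zer C (src C f) Z"
proof -
  let ?X = "src C f"
  have ob: "?X \<in> ob C" "Y \<in> ob C" using assms by auto
  interpret G: comm_group "hom_group C Y Z" using grp ob assms by blast
  interpret H: comm_group "hom_group C ?X Z" using grp ob assms by blast
  have z: "add C (zer C Y Z) (zer C Y Z) = zer C Y Z"
    using G.l_one[of "zer C Y Z"] zer_Hom[of Y Z] ob assms by (simp add: hom_group_def)
  have "cmp C (add C (zer C Y Z) (zer C Y Z)) f = add C (cmp C (zer C Y Z) f) (cmp C (zer C Y Z) f)"
    using pre assms ob zer_Hom[of Y Z] unfolding is_preadditive_def by (metis Hom_iff)
  then have e: "cmp C (zer C Y Z) f = add C (cmp C (zer C Y Z) f) (cmp C (zer C Y Z) f)" using z by simp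
  have m: "cmp C (zer C Y Z) f \<in> carrier (hom_group C ?X Z)"
    using assms ob by (simp add: hom_group_def)
  show ?thesis using e H.l_cancel_one'[OF m m] by (simp add: hom_group_def)
qed

lemma zr[simp]:
  assumes "g \<in> ar C" "src C g = Y" "X \<in> ob C"
  shows "cmp C g (zer C X Y) = zer C X (tgt C g)"
proof -
  let ?Z = "tgt C g"
  have ob: "?Z \<in> ob C" "Y \<in> ob C" using assms by auto
  interpret G: comm_group "hom_group C X Y" using grp ob assms by blast
  interpret H: comm_group "hom_group C X ?Z" using grp ob assms by blast
  have z: "add C (zer C X Y) (zer C X Y) = zer C X Y"
    using G.l_one[of "zer C X Y"] zer_Hom[of X Y] ob assms by (simp add: hom_group_def)
  have "cmp C g (add C (zer C X Y) (zer C X Y)) = add C (cmp C g (zer C X Y)) (cmp C g (zer C X Y))"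
    using pre assms ob zer_Hom[of X Y] unfolding is_preadditive_def by (metis Hom_iff)
  then have e: "cmp C g (zer C X Y) = add C (cmp C g (zer C X Y)) (cmp C g (zer C X Y))" using z by simp
  have m: "cmp C g (zer C X Y) \<in> carrier (hom_group C X ?Z)"
    using assms ob by (simp add: hom_group_def)
  show ?thesis using e H.l_cancel_one'[OF m m] by (simp add: hom_group_def)
qed

lemma ker_basic:
  assumes "is_kernel C f k"
  shows "k \<in> ar C" "f \<in> ar C" "tgt C k = src C f" "cmp C f k = zer C (src C k) (tgt C f)"
  using assms unfolding is_kernel_def by auto

lemma ker_fact:
  assumes "is_kernel C f k" "g \<in> ar C" "tgt C g = src C f" "cmp C f g = zer C (src C g) (tgt C f)"
  shows "\<exists>u. u \<in> ar C \<and> src C u = src C g \<and> tgt C u = src C k \<and> cmp C k u = g"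
  using assms unfolding is_kernel_def Hom_iff by blast

lemma ker_mono:
  assumes "is_kernel C f k"
  shows "mono C k"
  unfolding mono_def
proof (intro conjI ballI impI)
  show "k \<in> ar C" using ker_basic[OF assms] by simp
  fix g h assume g: "g \<in> ar C" and h: "h \<in> ar C" and gt: "tgt C g = src C k" and ht: "tgt C h = src C k"
    and s: "src C g = src C h" and e: "cmp C k g = cmp C k h"
  note kb = ker_basic[OF assms]
  have sk: "src C (cmp C k g) = src C g" using kb g gt by simp
  have "cmp C f (cmp C k g) = cmp C (cmp C f k) g" using assoc[of g k f] kb g gt by metis
  also have "\<dots> = cmp C (zer C (src C k) (tgt C f)) g" using kb by simp
  also have "\<dots> = zer C (src C g) (tgt C f)" using zl[of g "src C k" "tgt C f"] g gt kb by simp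
  finally have z: "cmp C f (cmp C k g) = zer C (src C (cmp C k g)) (tgt C f)" using sk by simp
  have kg: "cmp C k g \<in> ar C" "tgt C (cmp C k g) = src C f" using kb g gt by auto
  have U: "\<exists>!u. u \<in> Hom C (src C (cmp C k g)) (src C k) \<and> cmp C k u = cmp C k g"
    using assms kg z unfolding is_kernel_def by blast
  have G: "g \<in> Hom C (src C (cmp C k g)) (src C k) \<and> cmp C k g = cmp C k g" using g gt sk by simp
  have H: "h \<in> Hom C (src C (cmp C k g)) (src C k) \<and> cmp C k h = cmp C k g" using h ht sk s e by simp
  show "g = h" using U G H by blast
qed

lemma mono_cancel:
  assumes "mono C m" "g \<in> ar C" "h \<in> ar C" "tgt C g = src C m" "tgt C h = src C m" "src C g = src C h"
    "cmp C m g = cmp C m h"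
  shows "g = h" using assms unfolding mono_def by blast

lemma coker_basic:
  assumes "is_cokernel C f c"
  shows "c \<in> ar C" "f \<in> ar C" "src C c = tgt C f" "cmp C c f = zer C (src C f) (tgt C c)"
  using assms unfolding is_cokernel_def by auto

lemma coker_fact:
  assumes "is_cokernel C f c" "g \<in> ar C" "src C g = tgt C f" "cmp C g f = zer C (src C f) (tgt C g)"
  shows "\<exists>u. u \<in> ar C \<and> src C u = tgt C c \<and> tgt C u = tgt C g \<and> cmp C u c = g"
  using assms unfolding is_cokernel_def Hom_iff by blast

lemma coker_epi:
  assumes "is_cokernel C f c"
  shows "epi C c"
  unfolding epi_def
proof (intro conjI ballI impI)
  show "c \<in> ar C" using coker_basic[OF assms] by simp
  fix g h assume g: "g \<in> ar C" and h: "h \<in> ar C" and gt: "src C g = tgt C c" and ht: "src C h = tgt C c"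
    and s: "tgt C g = tgt C h" and e: "cmp C g c = cmp C h c"
  note kb = coker_basic[OF assms]
  have sk: "tgt C (cmp C g c) = tgt C g" using kb g gt by simp
  have "cmp C (cmp C g c) f = cmp C g (cmp C c f)" using assoc[of f c g] kb g gt by metis
  also have "\<dots> = cmp C g (zer C (src C f) (tgt C c))" using kb by simp
  also have "\<dots> = zer C (src C f) (tgt C g)" using zr[of g "tgt C c" "src C f"] g gt kb by simp
  finally have z: "cmp C (cmp C g c) f = zer C (src C f) (tgt C (cmp C g c))" using sk by simp
  have kg: "cmp C g c \<in> ar C" "src C (cmp C g c) = tgt C f" using kb g gt by auto
  have U: "\<exists>!u. u \<in> Hom C (tgt C c) (tgt C (cmp C g c)) \<and> cmp C u c = cmp C g c"
    using assms kg z unfolding is_cokernel_def by blast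
  have G: "g \<in> Hom C (tgt C c) (tgt C (cmp C g c)) \<and> cmp C g c = cmp C g c" using g gt sk by simp
  have H: "h \<in> Hom C (tgt C c) (tgt C (cmp C g c)) \<and> cmp C h c = cmp C g c" using h ht sk s e by simp
  show "g = h" using U G H by blast
qed

lemma epi_cancel:
  assumes "epi C m" "g \<in> ar C" "h \<in> ar C" "src C g = tgt C m" "src C h = tgt C m" "tgt C g = tgt C h"
    "cmp C g m = cmp C h m"
  shows "g = h" using assms unfolding epi_def by blast

end
context pa begin

lemma prod_proj: "is_product C I M P p \<Longrightarrow> a \<in> I \<Longrightarrow> p a \<in> ar C \<and> src C (p a) = P \<and> tgt C (p a) = M a"
  unfolding is_product_def by auto

lemma prod_inj:
  assumes pr: "is_product C I M P p" and a: "a \<in> I" and Mob: "\<forall>i \<in> I. M i \<in> ob C"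
  shows "\<exists>e. e \<in> ar C \<and> src C e = M a \<and> tgt C e = P \<and> cmp C (p a) e = idm C (M a)"
proof -
  let ?f = "\<lambda>l. if l = a then idm C (M a) else zer C (M a) (M l)"
  have "\<forall>l \<in> I. ?f l \<in> Hom C (M a) (M l)" using Mob a by auto
  moreover have U: "\<forall>X\<in>ob C. \<forall>f. (\<forall>i\<in>I. f i \<in> Hom C X (M i)) \<longrightarrow>
        (\<exists>!u. u \<in> Hom C X P \<and> (\<forall>i\<in>I. cmp C (p i) u = f i))" using pr unfolding is_product_def by blast
  ultimately obtain u where "u \<in> Hom C (M a) P" "\<forall>l \<in> I. cmp C (p l) u = ?f l"
    using U[rule_format, of "M a" ?f] a Mob by blast
  then show ?thesis using a by auto
qed

lemma coprod_inj: "is_coproduct C I M S s \<Longrightarrow> a \<in> I \<Longrightarrow> s a \<in> ar C \<and> src C (s a) = M a \<and> tgt C (s a) = S"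
  unfolding is_coproduct_def by auto

lemma coprod_proj:
  assumes pr: "is_coproduct C I M S s" and a: "a \<in> I" and Mob: "\<forall>i \<in> I. M i \<in> ob C"
  shows "\<exists>e. e \<in> ar C \<and> src C e = S \<and> tgt C e = M a \<and> cmp C e (s a) = idm C (M a)"
proof -
  let ?f = "\<lambda>l. if l = a then idm C (M a) else zer C (M l) (M a)"
  have "\<forall>l \<in> I. ?f l \<in> Hom C (M l) (M a)" using Mob a by auto
  moreover have U: "\<forall>X\<in>ob C. \<forall>f. (\<forall>i\<in>I. f i \<in> Hom C (M i) X) \<longrightarrow>
        (\<exists>!u. u \<in> Hom C S X \<and> (\<forall>i\<in>I. cmp C u (s i) = f i))" using pr unfolding is_coproduct_def by blast
  ultimately obtain u where "u \<in> Hom C S (M a)" "\<forall>l \<in> I. cmp C u (s l) = ?f l"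
    using U[rule_format, of "M a" ?f] a Mob by blast
  then show ?thesis using a by auto
qed

end

lemma part1:
  assumes ab: "is_abelian C" and Mob: "\<forall>i \<in> I. M i \<in> ob C"
    and pr: "is_product C I M P p" and sr: "strongly_rickart C P P"
    and i: "i \<in> I" and j: "j \<in> I"
  shows "strongly_rickart C (M j) (M i)"
  unfolding strongly_rickart_def
proof (intro ballI allI impI)
  interpret pa C using ab unfolding is_abelian_def by (simp add: pa_def)
  fix f k assume fH: "f \<in> Hom C (M j) (M i)" and kk: "is_kernel C f k"
  have f: "f \<in> ar C" "src C f = M j" "tgt C f = M i" using fH by auto
  note kb = ker_basic[OF kk]
  have km: "mono C k" by (rule ker_mono[OF kk])
  define K where "K = src C k"
  have k: "k \<in> ar C" "src C k = K" "tgt C k = M j" using kb f K_def by auto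
  have fk: "cmp C f k = zer C K (M i)" using kb f K_def by simp
  have pi: "p i \<in> ar C" "src C (p i) = P" "tgt C (p i) = M i" using prod_proj[OF pr i] by auto
  have pj: "p j \<in> ar C" "src C (p j) = P" "tgt C (p j) = M j" using prod_proj[OF pr j] by auto
  obtain ei where ei: "ei \<in> ar C" "src C ei = M i" "tgt C ei = P" "cmp C (p i) ei = idm C (M i)"
    using prod_inj[OF pr i Mob] by blast
  obtain ej where ej: "ej \<in> ar C" "src C ej = M j" "tgt C ej = P" "cmp C (p j) ej = idm C (M j)"
    using prod_inj[OF pr j Mob] by blast
  have Pob: "P \<in> ob C" "M i \<in> ob C" "M j \<in> ob C" "K \<in> ob C" using pi pj k Mob i j by auto
  have pei: "\<And>x. x \<in> ar C \<Longrightarrow> tgt C x = M i \<Longrightarrow> cmp C (p i) (cmp C ei x) = x"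
    using ei pi by (metis assoc idl)
  have pej: "\<And>x. x \<in> ar C \<Longrightarrow> tgt C x = M j \<Longrightarrow> cmp C (p j) (cmp C ej x) = x"
    using ej pj by (metis assoc idl)
  define g where "g = cmp C ei (cmp C f (p j))"
  have g: "g \<in> ar C" "src C g = P" "tgt C g = P" using g_def ei f pj by auto
  obtain kg where kgk: "is_kernel C g kg" using ab g unfolding is_abelian_def by blast
  note kgb = ker_basic[OF kgk]
  define K' where "K' = src C kg"
  have kg: "kg \<in> ar C" "src C kg = K'" "tgt C kg = P" using kgb g K'_def by auto
  have K'ob: "K' \<in> ob C" using kg by auto
  have gkg: "cmp C g kg = zer C K' P" using kgb g K'_def by simp
  from sr have kgfi: "fully_invariant C kg" and kgs: "is_section C kg"
    unfolding strongly_rickart_def using g kgk by auto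
  have "cmp C g (cmp C ej k) = zer C K P"
  proof -
    have "cmp C g (cmp C ej k) = cmp C ei (cmp C f (cmp C (p j) (cmp C ej k)))"
      using g_def ei f pj ej k by simp
    also have "\<dots> = cmp C ei (cmp C f k)" using pej k by simp
    also have "\<dots> = zer C K P" using fk ei Pob by simp
    finally show ?thesis .
  qed
  then obtain \<phi> where phi: "\<phi> \<in> ar C" "src C \<phi> = K" "tgt C \<phi> = K'" "cmp C kg \<phi> = cmp C ej k"
    using ker_fact[OF kgk, of "cmp C ej k"] ej k g kg by auto
  have "cmp C f (cmp C (p j) kg) = zer C K' (M i)"
  proof -
    have "cmp C (p i) (cmp C g kg) = zer C K' (M i)" using gkg pi K'ob by simp
    moreover have "cmp C (p i) (cmp C g kg) = cmp C f (cmp C (p j) kg)"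
      using g_def ei f pj kg pei by simp
    ultimately show ?thesis by simp
  qed
  then obtain \<psi> where psi: "\<psi> \<in> ar C" "src C \<psi> = K'" "tgt C \<psi> = K" "cmp C k \<psi> = cmp C (p j) kg"
    using ker_fact[OF kk, of "cmp C (p j) kg"] pj kg f k by auto
  have kpsiphi: "cmp C k (cmp C \<psi> \<phi>) = k"
  proof -
    have "cmp C k (cmp C \<psi> \<phi>) = cmp C (cmp C k \<psi>) \<phi>" by (rule assoc[symmetric]) (use k psi phi in auto)
    also have "\<dots> = cmp C (p j) (cmp C kg \<phi>)" using psi pj kg phi by simp
    also have "\<dots> = k" using phi pej k by simp
    finally show ?thesis .
  qed
  have psiphi: "cmp C \<psi> \<phi> = idm C K"
    by (rule mono_cancel[OF km]) (use psi phi k kpsiphi Pob in auto)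
  show "fully_invariant C k \<and> is_section C k"
  proof
    show "fully_invariant C k"
      unfolding fully_invariant_def
    proof (intro conjI km ballI)
      fix h assume hH: "h \<in> Hom C (tgt C k) (tgt C k)"
      have h: "h \<in> ar C" "src C h = M j" "tgt C h = M j" using hH k by auto
      define H where "H = cmp C ej (cmp C h (p j))"
      have H: "H \<in> ar C" "src C H = P" "tgt C H = P" using H_def ej h pj by auto
      have FI: "\<forall>h\<in>Hom C P P. \<exists>\<alpha>\<in>Hom C K' K'. cmp C h kg = cmp C kg \<alpha>"
        using kgfi unfolding fully_invariant_def by (simp only: kg(2,3)) blast
      have HH: "H \<in> Hom C P P" using H by simp
      obtain \<beta> where beta: "\<beta> \<in> Hom C K' K'" "cmp C H kg = cmp C kg \<beta>"
        using FI HH by blast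
      have b: "\<beta> \<in> ar C" "src C \<beta> = K'" "tgt C \<beta> = K'" using beta by auto
      have "cmp C k (cmp C \<psi> (cmp C \<beta> \<phi>)) = cmp C h k"
      proof -
        have "cmp C k (cmp C \<psi> (cmp C \<beta> \<phi>)) = cmp C (cmp C k \<psi>) (cmp C \<beta> \<phi>)"
          by (rule assoc[symmetric]) (use k psi b phi in auto)
        also have "\<dots> = cmp C (p j) (cmp C (cmp C kg \<beta>) \<phi>)" using psi pj kg b phi by simp
        also have "\<dots> = cmp C (p j) (cmp C (cmp C H kg) \<phi>)" using beta by simp
        also have "\<dots> = cmp C (p j) (cmp C H (cmp C kg \<phi>))" using H kg phi by simp
        also have "\<dots> = cmp C (p j) (cmp C H (cmp C ej k))" using phi by simp
        also have "\<dots> = cmp C (p j) (cmp C ej (cmp C h (cmp C (p j) (cmp C ej k))))"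
          using H_def ej h pj k by simp
        also have "\<dots> = cmp C h k" using pej h k by simp
        finally show ?thesis .
      qed
      moreover have "cmp C \<psi> (cmp C \<beta> \<phi>) \<in> Hom C (src C k) (src C k)" using psi b phi k by simp
      ultimately show "\<exists>\<alpha>\<in>Hom C (src C k) (src C k). cmp C h k = cmp C k \<alpha>" by metis
    qed
    obtain r where r: "r \<in> Hom C P K'" "cmp C r kg = idm C K'"
      using kgs kg unfolding is_section_def by auto
    have rr: "r \<in> ar C" "src C r = P" "tgt C r = K'" using r by auto
    define r' where "r' = cmp C \<psi> (cmp C r ej)"
    have r': "r' \<in> ar C" "src C r' = M j" "tgt C r' = K" using r'_def psi rr ej by auto
    have "cmp C r' k = cmp C \<psi> (cmp C (cmp C r kg) \<phi>)"
      using r'_def psi rr ej k kg phi by simp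
    also have "\<dots> = idm C K" using r psiphi psi K'ob phi by simp
    finally have "cmp C r' k = idm C K" .
    then show "is_section C k" unfolding is_section_def using k r' by auto
  qed
qed


lemma part2:
  assumes ab: "is_abelian C" and Mob: "\<forall>i \<in> I. M i \<in> ob C"
    and pr: "is_coproduct C I M S s" and sr: "dual_strongly_rickart C S S"
    and i: "i \<in> I" and j: "j \<in> I"
  shows "dual_strongly_rickart C (M j) (M i)"
  unfolding dual_strongly_rickart_def
proof (intro ballI allI impI)
  interpret pa C using ab unfolding is_abelian_def by (simp add: pa_def)
  fix f c assume fH: "f \<in> Hom C (M j) (M i)" and cc: "is_cokernel C f c"
  have f: "f \<in> ar C" "src C f = M j" "tgt C f = M i" using fH by auto
  note cb = coker_basic[OF cc]
  have ce: "epi C c" by (rule coker_epi[OF cc])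
  define Q where "Q = tgt C c"
  have c: "c \<in> ar C" "src C c = M i" "tgt C c = Q" using cb f Q_def by auto
  have cf: "cmp C c f = zer C (M j) Q" using cb f Q_def by simp
  have si: "s i \<in> ar C" "src C (s i) = M i" "tgt C (s i) = S" using coprod_inj[OF pr i] by auto
  have sj: "s j \<in> ar C" "src C (s j) = M j" "tgt C (s j) = S" using coprod_inj[OF pr j] by auto
  obtain qi where qi: "qi \<in> ar C" "src C qi = S" "tgt C qi = M i" "cmp C qi (s i) = idm C (M i)"
    using coprod_proj[OF pr i Mob] by blast
  obtain qj where qj: "qj \<in> ar C" "src C qj = S" "tgt C qj = M j" "cmp C qj (s j) = idm C (M j)"
    using coprod_proj[OF pr j Mob] by blast
  have Sob: "S \<in> ob C" "M i \<in> ob C" "M j \<in> ob C" "Q \<in> ob C" using si sj c Mob i j by auto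
  have qsi: "\<And>x. x \<in> ar C \<Longrightarrow> tgt C x = M i \<Longrightarrow> cmp C qi (cmp C (s i) x) = x"
    using qi si by (metis assoc idl)
  have qsj: "\<And>x. x \<in> ar C \<Longrightarrow> tgt C x = M j \<Longrightarrow> cmp C qj (cmp C (s j) x) = x"
    using qj sj by (metis assoc idl)
  define g where "g = cmp C (s i) (cmp C f qj)"
  have g: "g \<in> ar C" "src C g = S" "tgt C g = S" using g_def si f qj by auto
  obtain cg where cgc: "is_cokernel C g cg" using ab g unfolding is_abelian_def by blast
  note cgb = coker_basic[OF cgc]
  define Q' where "Q' = tgt C cg"
  have cg: "cg \<in> ar C" "src C cg = S" "tgt C cg = Q'" using cgb g Q'_def by auto
  have Q'ob: "Q' \<in> ob C" using cg by auto
  have cgg: "cmp C cg g = zer C S Q'" using cgb g Q'_def by simp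
  from sr have cgfi: "fully_coinvariant C cg" and cgr: "is_retraction C cg"
    unfolding dual_strongly_rickart_def using g cgc by auto
  have "cmp C (cmp C c qi) g = zer C S Q"
  proof -
    have "cmp C (cmp C c qi) g = cmp C c (cmp C qi (cmp C (s i) (cmp C f qj)))"
      using g_def si f qj qi c by simp
    also have "\<dots> = cmp C c (cmp C f qj)" using qsi f qj by simp
    also have "\<dots> = cmp C (cmp C c f) qj" using c f qj by simp
    also have "\<dots> = zer C S Q" using cf qj Sob by simp
    finally show ?thesis .
  qed
  then obtain \<phi> where phi: "\<phi> \<in> ar C" "src C \<phi> = Q'" "tgt C \<phi> = Q" "cmp C \<phi> cg = cmp C c qi"
    using coker_fact[OF cgc, of "cmp C c qi"] qi c g cg by auto
  have "cmp C (cmp C cg (s i)) f = zer C (M j) Q'"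
  proof -
    have "cmp C (cmp C cg g) (s j) = zer C (M j) Q'" using cgg sj Q'ob by simp
    moreover have "cmp C (cmp C cg g) (s j) = cmp C (cmp C cg (s i)) f"
      using g_def si f qj cg qsj sj by simp
    ultimately show ?thesis by simp
  qed
  then obtain \<psi> where psi: "\<psi> \<in> ar C" "src C \<psi> = Q" "tgt C \<psi> = Q'" "cmp C \<psi> c = cmp C cg (s i)"
    using coker_fact[OF cc, of "cmp C cg (s i)"] si cg f c by auto
  have phipsic: "cmp C (cmp C \<phi> \<psi>) c = c"
  proof -
    have "cmp C (cmp C \<phi> \<psi>) c = cmp C \<phi> (cmp C \<psi> c)" using c psi phi by simp
    also have "\<dots> = cmp C \<phi> (cmp C cg (s i))" using psi by simp
    also have "\<dots> = cmp C (cmp C \<phi> cg) (s i)" by (rule assoc[symmetric]) (use si cg phi in auto)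
    also have "\<dots> = c" using phi qsi c si qi by simp
    finally show ?thesis .
  qed
  have phipsi: "cmp C \<phi> \<psi> = idm C Q"
    by (rule epi_cancel[OF ce]) (use psi phi c phipsic Sob in auto)
  show "fully_coinvariant C c \<and> is_retraction C c"
  proof
    show "fully_coinvariant C c"
      unfolding fully_coinvariant_def
    proof (intro conjI ce ballI)
      fix h assume hH: "h \<in> Hom C (src C c) (src C c)"
      have h: "h \<in> ar C" "src C h = M i" "tgt C h = M i" using hH c by auto
      define H where "H = cmp C (s i) (cmp C h qi)"
      have H: "H \<in> ar C" "src C H = S" "tgt C H = S" using H_def si h qi by auto
      have FI: "\<forall>h\<in>Hom C S S. \<exists>\<gamma>\<in>Hom C Q' Q'. cmp C cg h = cmp C \<gamma> cg"
        using cgfi unfolding fully_coinvariant_def by (simp only: cg(2,3)) blast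
      have HH: "H \<in> Hom C S S" using H by simp
      obtain \<gamma> where gam: "\<gamma> \<in> Hom C Q' Q'" "cmp C cg H = cmp C \<gamma> cg"
        using FI HH by blast
      have b: "\<gamma> \<in> ar C" "src C \<gamma> = Q'" "tgt C \<gamma> = Q'" using gam by auto
      have "cmp C (cmp C \<phi> (cmp C \<gamma> \<psi>)) c = cmp C c h"
      proof -
        have "cmp C (cmp C \<phi> (cmp C \<gamma> \<psi>)) c = cmp C \<phi> (cmp C \<gamma> (cmp C \<psi> c))"
          using c psi b phi by simp
        also have "\<dots> = cmp C \<phi> (cmp C (cmp C \<gamma> cg) (s i))" using psi si cg b phi by simp
        also have "\<dots> = cmp C \<phi> (cmp C (cmp C cg H) (s i))" using gam by simp
        also have "\<dots> = cmp C \<phi> (cmp C cg (cmp C H (s i)))" using H cg phi si by simp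
        also have "\<dots> = cmp C (cmp C \<phi> cg) (cmp C H (s i))"
          by (rule assoc[symmetric]) (use H cg phi si in auto)
        also have "\<dots> = cmp C (cmp C c qi) (cmp C H (s i))" using phi by simp
        also have "\<dots> = cmp C c (cmp C qi (cmp C (s i) (cmp C h (cmp C qi (s i)))))"
          using H_def si h qi c by simp
        also have "\<dots> = cmp C c h" using qsi h qi si by simp
        finally show ?thesis .
      qed
      moreover have "cmp C \<phi> (cmp C \<gamma> \<psi>) \<in> Hom C (tgt C c) (tgt C c)" using psi b phi c by simp
      ultimately show "\<exists>\<gamma>\<in>Hom C (tgt C c) (tgt C c). cmp C c h = cmp C \<gamma> c" by metis
    qed
    obtain r where r: "r \<in> Hom C Q' S" "cmp C cg r = idm C Q'"
      using cgr cg unfolding is_retraction_def by auto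
    have rr: "r \<in> ar C" "src C r = Q'" "tgt C r = S" using r by auto
    define r' where "r' = cmp C qi (cmp C r \<psi>)"
    have r': "r' \<in> ar C" "src C r' = Q" "tgt C r' = M i" using r'_def psi rr qi by auto
    have "cmp C c r' = cmp C (cmp C c qi) (cmp C r \<psi>)"
      using r'_def psi rr qi c by simp
    also have "\<dots> = cmp C (cmp C \<phi> cg) (cmp C r \<psi>)" using phi by simp
    also have "\<dots> = cmp C \<phi> (cmp C (cmp C cg r) \<psi>)"
      using psi rr cg phi(1-3) by simp
    also have "\<dots> = idm C Q" using r phipsi psi Q'ob by simp
    finally have "cmp C c r' = idm C Q" .
    then show "is_retraction C c" unfolding is_retraction_def using c r' by auto
  qed
qed

theorem proposition3p4:
  fixes C :: "('o, 'm) acat" and I :: "'i set" and M :: "'i \<Rightarrow> 'o"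
  assumes "is_abelian C"
    and "\<forall>i \<in> I. M i \<in> ob C"
  shows "(\<forall>P p. is_product C I M P p \<and> strongly_rickart C P P \<longrightarrow>
            (\<forall>i \<in> I. \<forall>j \<in> I. strongly_rickart C (M j) (M i)))
       \<and> (\<forall>S s. is_coproduct C I M S s \<and> dual_strongly_rickart C S S \<longrightarrow>
            (\<forall>i \<in> I. \<forall>j \<in> I. dual_strongly_rickart C (M j) (M i)))"
  using part1[OF assms] part2[OF assms] by blast

end
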